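(* Let $L,M,N\in\mathbb N$ and $S=\{m/N^{L+M}: m=1,\dots,N^{L+M}-1\}$. Let $\vec B_L$ be a binary digit vector of length $N^L$ and $\vec B_M$ a binary digit vector of length $N^M$. Then $F_{\vec B_L}(x)=F_{\vec B_M}(x)$ for all $x\in S$ if and only if $F_{\vec B_L}=F_{\vec B_M}$.
   Context: A binary digit vector of length (scale factor) $K\ge3$ is $\vec B=(b_0,\dots,b_{K-1})\in\{0,1\}^K$ with $2\le\|\vec B\|:=\sum_i b_i\le K-1$; its digit set is $D=\{i:b_i=1\}$. With $\phi_d(x)=(x+d)/K$ for $d\in D$, let $\mu_{\vec B}$ be the unique Borel probability measure with $\mu_{\vec B}=\frac{1}{\|\vec B\|}\sum_{d\in D}\mu_{\vec B}\circ\phi_d^{-1}$, supported on the attractor $C_{\vec B}\subset[0,1]$. The CDF is $F_{\vec B}(x)=\mu_{\vec B}([0,x])$, $x\in[0,1]$. *)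

theory Defs
  imports "HOL-Probability.Probability"
begin

definition binary_digit_vector :: "nat list \<Rightarrow> bool" where
  "binary_digit_vector B \<longleftrightarrow> length B \<ge> 3 \<and> set B \<subseteq> {0, 1} \<and>
     2 \<le> sum_list B \<and> sum_list B \<le> length B - 1"

definition digit_set :: "nat list \<Rightarrow> nat set" where
  "digit_set B = {i. i < length B \<and> B ! i = 1}"

definition digit_map :: "nat \<Rightarrow> nat \<Rightarrow> real \<Rightarrow> real" where
  "digit_map K d x = (x + real d) / real K"

definition ss_measure :: "nat list \<Rightarrow> real measure" where
  "ss_measure B = (THE \<mu>. sets \<mu> = sets borel \<and> prob_space \<mu> \<and>
     (\<forall>A \<in> sets borel. measure \<mu> A =
        (\<Sum>d \<in> digit_set B. measure \<mu> (digit_map (length B) d -` A)) / real (sum_list B)))"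

definition ss_cdf :: "nat list \<Rightarrow> real \<Rightarrow> real" where
  "ss_cdf B x = measure (ss_measure B) {0..x}"

end

theory Submission
  imports Defs
begin


lemma bdv_facts:
  assumes "binary_digit_vector B"
  shows "finite (digit_set B)" "digit_set B \<subseteq> {..<length B}"
    "card (digit_set B) = sum_list B" "sum_list B \<ge> 2" "length B \<ge> 3"
    "sum_list B < length B"
proof -
  have s: "set B \<subseteq> {0,1}" using assms unfolding binary_digit_vector_def by auto
  show "finite (digit_set B)" "digit_set B \<subseteq> {..<length B}"
    unfolding digit_set_def by auto
  have "sum_list B = (\<Sum>i<length B. B ! i)" by (simp add: sum_list_sum_nth atLeast0LessThan)
  also have "\<dots> = (\<Sum>i<length B. if B ! i = 1 then 1 else 0)"
  proof (rule sum.cong)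
    fix i assume "i \<in> {..<length B}"
    then have "B ! i \<in> {0,1}" using s nth_mem by blast
    then show "B ! i = (if B ! i = 1 then 1 else 0)" by auto
  qed simp
  also have "\<dots> = card ({..<length B} \<inter> {i. B ! i = 1})"
    by (simp add: sum.If_cases)
  also have "{..<length B} \<inter> {i. B ! i = 1} = digit_set B" unfolding digit_set_def by auto
  finally show "card (digit_set B) = sum_list B" by simp
  show "sum_list B \<ge> 2" "length B \<ge> 3" "sum_list B < length B"
    using assms unfolding binary_digit_vector_def by auto
qed

definition code :: "nat \<Rightarrow> nat stream \<Rightarrow> real" where
  "code K w = (\<Sum>i. real (min (w !! i) K) / real K ^ Suc i)"

lemma code_summable:
  assumes "K \<ge> 2"
  shows "summable (\<lambda>i. real (min (w !! i) K) / real K ^ Suc i)"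
proof (rule summable_comparison_test)
  show "summable (\<lambda>i. real K * (1 / real K) ^ Suc i)"
    using assms by (intro summable_mult summable_geometric_iff[THEN iffD2] summable_Suc_iff[THEN iffD2]) auto
  show "\<exists>N. \<forall>n\<ge>N. norm (real (min (w !! n) K) / real K ^ Suc n) \<le> real K * (1 / real K) ^ Suc n"
  proof (intro exI allI impI)
    fix n :: nat
    have "real (min (w !! n) K) \<le> real K" by simp
    then have "real (min (w !! n) K) / real K ^ Suc n \<le> real K / real K ^ Suc n"
      using assms by (intro divide_right_mono) auto
    then show "norm (real (min (w !! n) K) / real K ^ Suc n) \<le> real K * (1 / real K) ^ Suc n"
      by (simp add: power_divide)
  qed
qed

lemma code_Stream:
  assumes "K \<ge> 2" "d < K"
  shows "code K (d ## w) = (real d + code K w) / real K"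
proof -
  let ?f = "\<lambda>w i. real (min (w !! i) K) / real K ^ Suc i"
  have "(\<Sum>i. ?f (d ## w) (Suc i)) = (\<Sum>i. ?f w i / real K)"
    by (simp add: field_simps)
  also have "\<dots> = code K w / real K" unfolding code_def
    by (rule suminf_divide[OF code_summable[OF assms(1)]])
  finally have "code K w / real K = (\<Sum>i. ?f (d ## w) (Suc i))" by simp
  also have "\<dots> = code K (d ## w) - ?f (d ## w) 0"
    unfolding code_def by (rule suminf_split_head[OF code_summable[OF assms(1)]])
  finally show ?thesis using assms by (simp add: field_simps)
qed

lemma code_measurable[measurable]: "code K \<in> borel_measurable (stream_space (measure_pmf p))"
  unfolding code_def by measurable



definition Pss :: "nat list \<Rightarrow> real measure \<Rightarrow> bool" where
  "Pss B \<mu> \<longleftrightarrow> sets \<mu> = sets borel \<and> prob_space \<mu> \<and>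
     (\<forall>A \<in> sets borel. measure \<mu> A =
        (\<Sum>d \<in> digit_set B. measure \<mu> (digit_map (length B) d -` A)) / real (sum_list B))"

lemma digit_map_measurable[measurable]: "digit_map K d \<in> borel_measurable borel"
  unfolding digit_map_def by measurable

lemma digit_map_pre: "A \<in> sets borel \<Longrightarrow> digit_map K d -` A \<in> sets borel"
  using measurable_sets[OF digit_map_measurable, of A K d] by simp

lemma Pss_exists:
  assumes B: "binary_digit_vector B"
  shows "\<exists>\<mu>. Pss B \<mu>"
proof -
  define D where "D = digit_set B"
  define K where "K = length B"
  note bf = bdv_facts[OF B, folded D_def K_def]
  have "card D \<ge> 2" using bf(3,4) by simp
  then have Dne: "D \<noteq> {}" by (metis card.empty not_numeral_le_zero)
  define P where "P = measure_pmf (pmf_of_set D)"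
  define S where "S = stream_space P"
  have PP: "prob_space P" unfolding P_def by (rule prob_space_measure_pmf)
  have K2: "K \<ge> 2" using bf by auto
  define \<mu> where "\<mu> = distr S borel (code K)"
  have cm: "code K \<in> S \<rightarrow>\<^sub>M borel" unfolding S_def P_def by measurable
  have sets: "sets \<mu> = sets borel" unfolding \<mu>_def by simp
  have SP: "prob_space S" unfolding S_def by (rule prob_space.prob_space_stream_space[OF PP])
  have pr: "prob_space \<mu>" unfolding \<mu>_def using SP cm by (simp add: prob_space.prob_space_distr)
  have em: "emeasure \<mu> A = (\<Sum>d\<in>D. emeasure \<mu> (digit_map K d -` A)) / of_nat (card D)"
    if A: "A \<in> sets borel" for A
  proof -
    have "emeasure \<mu> A = (\<integral>\<^sup>+x. indicator A x \<partial>\<mu>)"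
      using A sets by (simp add: nn_integral_indicator)
    also have "\<dots> = (\<integral>\<^sup>+w. indicator A (code K w) \<partial>S)"
      unfolding \<mu>_def by (intro nn_integral_distr[OF cm]) (use A in measurable)
    also have "\<dots> = (\<integral>\<^sup>+x. (\<integral>\<^sup>+w. indicator A (code K (x ## w)) \<partial>S) \<partial>P)"
      unfolding S_def using cm A
      by (intro prob_space.nn_integral_stream_space[OF PP]) (simp add: S_def)
    also have "\<dots> = (\<Sum>d\<in>D. (\<integral>\<^sup>+w. indicator A (code K (d ## w)) \<partial>S)) / of_nat (card D)"
      unfolding P_def using Dne bf(1) by (simp add: nn_integral_pmf_of_set)
    also have "(\<Sum>d\<in>D. (\<integral>\<^sup>+w. indicator A (code K (d ## w)) \<partial>S)) =
       (\<Sum>d\<in>D. emeasure \<mu> (digit_map K d -` A))"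
    proof (rule sum.cong[OF refl])
      fix d assume "d \<in> D"
      then have dK: "d < K" using bf(2) by auto
      have "(\<integral>\<^sup>+w. indicator A (code K (d ## w)) \<partial>S) =
            (\<integral>\<^sup>+w. indicator (digit_map K d -` A) (code K w) \<partial>S)"
        using code_Stream[OF K2 dK]
        by (intro nn_integral_cong) (simp add: digit_map_def indicator_def add.commute)
      also have "\<dots> = (\<integral>\<^sup>+x. indicator (digit_map K d -` A) x \<partial>\<mu>)"
        unfolding \<mu>_def by (intro nn_integral_distr[OF cm, symmetric]) (use A in measurable)
      also have "\<dots> = emeasure \<mu> (digit_map K d -` A)"
        using digit_map_pre[OF A] sets by (simp add: nn_integral_indicator)
      finally show "(\<integral>\<^sup>+w. indicator A (code K (d ## w)) \<partial>S) = emeasure \<mu> (digit_map K d -` A)" .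
    qed
    finally show ?thesis .
  qed
  have "Pss B \<mu>" unfolding Pss_def
  proof (intro conjI sets pr ballI)
    fix A :: "real set" assume A: "A \<in> sets borel"
    interpret prob_space \<mu> by (rule pr)
    have mA: "digit_map K d -` A \<in> sets \<mu>" for d using digit_map_pre[OF A] sets by simp
    have "ennreal (measure \<mu> A) = (\<Sum>d\<in>D. ennreal (measure \<mu> (digit_map K d -` A))) / ennreal (real (card D))"
      using em[OF A] A sets mA by (simp add: emeasure_eq_measure ennreal_of_nat_eq_real_of_nat)
    also have "\<dots> = ennreal ((\<Sum>d\<in>D. measure \<mu> (digit_map K d -` A)) / real (card D))"
      using Dne bf(1) by (subst sum_ennreal) (auto intro!: divide_ennreal sum_nonneg simp: card_gt_0_iff)
    finally have "measure \<mu> A = (\<Sum>d\<in>D. measure \<mu> (digit_map K d -` A)) / real (card D)"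
      by (subst (asm) ennreal_inj) (auto intro!: sum_nonneg divide_nonneg_nonneg)
    then show "measure \<mu> A = (\<Sum>d\<in>digit_set B. measure \<mu> (digit_map (length B) d -` A)) / real (sum_list B)"
      using bf(3) by (simp add: D_def K_def)
  qed
  then show ?thesis by blast
qed



definition sfun :: "nat set \<Rightarrow> nat \<Rightarrow> real \<Rightarrow> real" where
  "sfun D j t = (\<Sum>d\<in>D. if d < j then 1 else if d = j then t else 0)"

lemma Pss_facts:
  assumes B: "binary_digit_vector B" and P: "Pss B \<mu>"
  defines "K \<equiv> length B" and "D \<equiv> digit_set B" and "n \<equiv> sum_list B"
  shows "real_distribution \<mu>"
    and "\<And>x. x < 0 \<Longrightarrow> cdf \<mu> x = 0"
    and "cdf \<mu> 0 = 0"
    and "\<And>x. x \<ge> 1 \<Longrightarrow> cdf \<mu> x = 1"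
    and "\<And>x j. x \<in> {0..1} \<Longrightarrow> j < K \<Longrightarrow> cdf \<mu> ((x + real j) / real K) = sfun D j (cdf \<mu> x) / real n"
    and "\<And>x. x \<ge> 0 \<Longrightarrow> measure \<mu> {0..x} = cdf \<mu> x"
proof -
  note bf = bdv_facts[OF B, folded D_def K_def n_def]
  have n2: "real n \<ge> 2" using bf by simp
  have K3: "real K \<ge> 3" using bf by simp
  show RD: "real_distribution \<mu>" using P unfolding Pss_def real_distribution_def real_distribution_axioms_def by auto
  interpret real_distribution \<mu> by (rule RD)
  have eq: "measure \<mu> A = (\<Sum>d\<in>D. measure \<mu> (digit_map K d -` A)) / real n" if "A \<in> sets borel" for A
    using P that unfolding Pss_def K_def D_def n_def by auto
  have pre: "digit_map K d -` {..y} = {..real K * y - real d}" for d y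
    using K3 by (auto simp: digit_map_def field_simps)
  have ceq: "cdf \<mu> y = (\<Sum>d\<in>D. cdf \<mu> (real K * y - real d)) / real n" for y
    using eq[of "{..y}"] by (simp add: cdf_def pre)
  have cn: "real (card D) = real n" using bf by simp
  have up: "cdf \<mu> y \<le> cdf \<mu> (real K * y)" for y
  proof -
    have "(\<Sum>d\<in>D. cdf \<mu> (real K * y - real d)) \<le> (\<Sum>d\<in>D. cdf \<mu> (real K * y))"
      by (intro sum_mono cdf_nondecreasing) auto
    then show ?thesis using ceq[of y] n2 cn by (simp add: divide_le_eq mult.commute)
  qed
  have upj: "cdf \<mu> y \<le> cdf \<mu> (real K ^ j * y)" for j y
  proof (induction j)
    case (Suc j)
    then show ?case using up[of "real K ^ j * y"] by (simp add: mult.assoc)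
  qed simp
  show neg: "cdf \<mu> x = 0" if "x < 0" for x
  proof (rule ccontr)
    assume "cdf \<mu> x \<noteq> 0"
    then have e: "cdf \<mu> x > 0" using cdf_nonneg[of x] by simp
    from cdf_lim_at_bot have "eventually (\<lambda>y. cdf \<mu> y < cdf \<mu> x) at_bot"
      using e by (rule order_tendstoD)
    then obtain Y where Y: "\<And>y. y \<le> Y \<Longrightarrow> cdf \<mu> y < cdf \<mu> x" by (auto simp: eventually_at_bot_linorder)
    obtain j :: nat where j: "real j > \<bar>Y\<bar> / (- x)" using reals_Archimedean2 by blast
    have "real j \<le> 2 ^ j" using of_nat_less_two_power[of j, where ?'a=real] by linarith
    also have "(2::real) ^ j \<le> real K ^ j" using K3 by (intro power_mono) auto
    finally have "\<bar>Y\<bar> / (- x) < real K ^ j" using j by linarith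
    then have "\<bar>Y\<bar> < real K ^ j * (- x)" using that by (subst (asm) pos_divide_less_eq) auto
    then have "real K ^ j * x \<le> Y" by (simp add: algebra_simps)
    then have "cdf \<mu> (real K ^ j * x) < cdf \<mu> x" by (rule Y)
    with upj[of x j] show False by simp
  qed
  show z: "cdf \<mu> 0 = 0"
  proof -
    have "(\<Sum>d\<in>D. cdf \<mu> (real K * 0 - real d)) = (\<Sum>d\<in>D. if d = 0 then cdf \<mu> 0 else 0)"
      by (intro sum.cong refl) (auto intro: neg)
    also have "\<dots> = (if 0 \<in> D then cdf \<mu> 0 else 0)" using bf(1) by simp
    finally have "cdf \<mu> 0 = (if 0 \<in> D then cdf \<mu> 0 else 0) / real n" using ceq[of 0] by simp
    then show ?thesis using n2 by (auto split: if_splits simp: field_simps)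
  qed
  have dn: "cdf \<mu> (real K * (y - 1) + 1) \<le> cdf \<mu> y" for y
  proof -
    have "(\<Sum>d\<in>D. cdf \<mu> (real K * (y - 1) + 1)) \<le> (\<Sum>d\<in>D. cdf \<mu> (real K * y - real d))"
    proof (intro sum_mono cdf_nondecreasing)
      fix d assume "d \<in> D"
      then have "d < K" using bf(2) by auto
      then have "real d \<le> real K - 1" by linarith
      then show "real K * (y - 1) + 1 \<le> real K * y - real d" by (simp add: algebra_simps)
    qed
    then show ?thesis using ceq[of y] n2 cn by (simp add: le_divide_eq mult.commute)
  qed
  have dnj: "cdf \<mu> (real K ^ j * (y - 1) + 1) \<le> cdf \<mu> y" for j y
  proof (induction j)
    case (Suc j)
    then show ?case using dn[of "real K ^ j * (y - 1) + 1"] by (simp add: mult.assoc)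
  qed simp
  have big: "cdf \<mu> x = 1" if "x > 1" for x
  proof (rule ccontr)
    assume "cdf \<mu> x \<noteq> 1"
    then have e: "cdf \<mu> x < 1" using cdf_bounded_prob[of x] by simp
    from cdf_lim_at_top_prob have "eventually (\<lambda>y. cdf \<mu> y > cdf \<mu> x) at_top"
      using e by (rule order_tendstoD)
    then obtain Y where Y: "\<And>y. y \<ge> Y \<Longrightarrow> cdf \<mu> y > cdf \<mu> x" by (auto simp: eventually_at_top_linorder)
    obtain j :: nat where j: "real j > \<bar>Y\<bar> / (x - 1)" using reals_Archimedean2 by blast
    have "real j \<le> 2 ^ j" using of_nat_less_two_power[of j, where ?'a=real] by linarith
    also have "(2::real) ^ j \<le> real K ^ j" using K3 by (intro power_mono) auto
    finally have "\<bar>Y\<bar> / (x - 1) < real K ^ j" using j by linarith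
    then have "\<bar>Y\<bar> < real K ^ j * (x - 1)" using that by (subst (asm) pos_divide_less_eq) auto
    then have "real K ^ j * (x - 1) + 1 \<ge> Y" by linarith
    then have "cdf \<mu> (real K ^ j * (x - 1) + 1) > cdf \<mu> x" by (rule Y)
    with dnj[of j x] show False by simp
  qed
  have one: "cdf \<mu> 1 = 1"
  proof -
    have "(\<Sum>d\<in>D. cdf \<mu> (real K * 1 - real d)) = (\<Sum>d\<in>D. 1 - (if d = K - 1 then 1 - cdf \<mu> 1 else 0))"
    proof (intro sum.cong refl)
      fix d assume "d \<in> D"
      then have "d < K" using bf(2) by auto
      then show "cdf \<mu> (real K * 1 - real d) = 1 - (if d = K - 1 then 1 - cdf \<mu> 1 else 0)"
        by (cases "d = K - 1") (auto intro!: big simp: of_nat_diff)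
    qed
    also have "\<dots> = real n - (if K - 1 \<in> D then 1 - cdf \<mu> 1 else 0)"
      using bf(1) cn by (simp add: sum_subtractf)
    finally have "cdf \<mu> 1 * real n = real n - (if K - 1 \<in> D then 1 - cdf \<mu> 1 else 0)"
      using ceq[of 1] n2 by (simp add: field_simps)
    then have "(real n - 1) * (cdf \<mu> 1 - 1) = 0"
      using n2 by (cases "K - 1 \<in> D") (auto simp: algebra_simps)
    then show ?thesis using n2 by simp
  qed
  show ge1: "cdf \<mu> x = 1" if "x \<ge> 1" for x
    using that big one by (cases "x = 1") auto
  show "cdf \<mu> ((x + real j) / real K) = sfun D j (cdf \<mu> x) / real n"
    if x: "x \<in> {0..1}" and j: "j < K" for x j
  proof -
    have "(\<Sum>d\<in>D. cdf \<mu> (real K * ((x + real j) / real K) - real d)) = sfun D j (cdf \<mu> x)"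
      unfolding sfun_def
    proof (intro sum.cong refl)
      fix d assume "d \<in> D"
      have kk: "real K * ((x + real j) / real K) - real d = x + real j - real d" using K3 by simp
      have "cdf \<mu> (x + real j - real d) = (if d < j then 1 else if d = j then cdf \<mu> x else 0)"
      proof (cases "d < j")
        case True
        then have "real d + 1 \<le> real j" by linarith
        then have "x + real j - real d \<ge> 1" using x by auto
        then show ?thesis using True ge1 by simp
      next
        case False
        show ?thesis
        proof (cases "d = j")
          case False
          then have "real j + 1 \<le> real d" using \<open>\<not> d < j\<close> by linarith
          then have "x + real j - real d \<le> 0" using x by auto
          then show ?thesis using False \<open>\<not> d < j\<close> z neg
            by (cases "x + real j - real d = 0") auto
        qed (use False in auto)
      qed
      then show "cdf \<mu> (real K * ((x + real j) / real K) - real d) = (if d < j then 1 else if d = j then cdf \<mu> x else 0)"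
        by (simp only: kk)
    qed
    then show ?thesis by (subst ceq) simp
  qed
  show "measure \<mu> {0..x} = cdf \<mu> x" if "x \<ge> 0" for x
  proof -
    have "measure \<mu> {..<0} = (\<Sum>d\<in>D. measure \<mu> (digit_map K d -` {..<0})) / real n"
      by (rule eq) simp
    also have "(\<Sum>d\<in>D. measure \<mu> (digit_map K d -` {..<0})) = (\<Sum>d\<in>D. if d = 0 then measure \<mu> {..<0} else 0)"
    proof (intro sum.cong refl)
      fix d
      have p: "digit_map K d -` {..<0} = {..< - real d}" using K3 by (auto simp: digit_map_def field_simps)
      show "measure \<mu> (digit_map K d -` {..<0}) = (if d = 0 then measure \<mu> {..<0} else 0)"
      proof (cases "d = 0")
        case False
        have "measure \<mu> {..< - real d} \<le> measure \<mu> {..-1}"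
          using False by (intro finite_measure_mono) auto
        also have "\<dots> = 0" using neg[of "-1"] by (simp add: cdf_def)
        finally show ?thesis using False p measure_nonneg[of \<mu> "{..< - real d}"] by simp
      next
        case True
        have "digit_map K d -` {..<0} = {..<0}" using p True by simp
        then show ?thesis using True by simp
      qed
    qed
    also have "\<dots> = (if 0 \<in> D then measure \<mu> {..<0} else 0)" using bf(1) by simp
    finally have m0: "measure \<mu> {..<0} = 0" using n2 by (auto split: if_splits simp: field_simps)
    have "{..x} = {..<0} \<union> {0..x}" using that by auto
    then have "cdf \<mu> x = measure \<mu> {..<0} + measure \<mu> {0..x}"
      unfolding cdf_def by (simp add: finite_measure_Union ivl_disj_int_one(4))
    then show ?thesis using m0 by simp
  qed
qed



lemma dense_eq:
  fixes F G :: "real \<Rightarrow> real" and b :: nat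
  assumes b: "b \<ge> 2" and lat: "\<And>k j. j \<le> b ^ k \<Longrightarrow> F (real j / real b ^ k) = G (real j / real b ^ k)"
    and cF: "\<And>x. continuous (at_right x) F" and cG: "\<And>x. continuous (at_right x) G"
    and x: "x \<in> {0..1}"
  shows "F x = G x"
proof (cases "x = 1")
  case True
  then show ?thesis using lat[of 1 0] by simp
next
  case False
  with x have x1: "x < 1" "x \<ge> 0" by auto
  define s where "s k = real (nat \<lfloor>x * real b ^ k\<rfloor> + 1) / real b ^ k" for k
  have bp: "real b ^ k > 0" for k using b by simp
  have fl: "real (nat \<lfloor>x * real b ^ k\<rfloor>) = of_int \<lfloor>x * real b ^ k\<rfloor>" for k
    using x1 bp[of k] by simp
  have jle: "nat \<lfloor>x * real b ^ k\<rfloor> + 1 \<le> b ^ k" for k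
  proof -
    have "x * real b ^ k < real b ^ k" using x1 bp[of k] by simp
    then have "\<lfloor>x * real b ^ k\<rfloor> < int (b ^ k)" by (simp add: floor_less_iff)
    moreover have "\<lfloor>x * real b ^ k\<rfloor> \<ge> 0" using x1 bp[of k] by simp
    ultimately have "nat \<lfloor>x * real b ^ k\<rfloor> < b ^ k" by (simp add: nat_less_iff)
    then show ?thesis by linarith
  qed
  have sgt: "s k > x" for k
  proof -
    have "x * real b ^ k < of_int \<lfloor>x * real b ^ k\<rfloor> + 1" by linarith
    then show ?thesis unfolding s_def using bp[of k] fl[of k] by (simp add: field_simps)
  qed
  have sle: "s k \<le> x + inverse (real b ^ k)" for k
  proof -
    have "of_int \<lfloor>x * real b ^ k\<rfloor> + 1 \<le> x * real b ^ k + 1" by linarith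
    then show ?thesis unfolding s_def using bp[of k] fl[of k] by (simp add: field_simps)
  qed
  have "(\<lambda>k. x + inverse (real b ^ k)) \<longlonglongrightarrow> x + 0"
    using b by (intro tendsto_add tendsto_const LIMSEQ_inverse_realpow_zero) auto
  then have st: "s \<longlonglongrightarrow> x"
    by (intro tendsto_sandwich[of "\<lambda>_. x" s _ "\<lambda>k. x + inverse (real b ^ k)"])
       (auto simp: less_imp_le[OF sgt] sle)
  have sf: "filterlim s (at_right x) sequentially"
    by (rule tendsto_imp_filterlim_at_right[OF st]) (simp add: sgt)
  have "(\<lambda>k. F (s k)) \<longlonglongrightarrow> F x"
    using filterlim_compose[OF cF[unfolded continuous_within] sf] .
  moreover have "(\<lambda>k. G (s k)) \<longlonglongrightarrow> G x"
    using filterlim_compose[OF cG[unfolded continuous_within] sf] .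
  moreover have "(\<lambda>k. F (s k)) = (\<lambda>k. G (s k))"
    unfolding s_def using lat[OF jle] by simp
  ultimately show ?thesis using LIMSEQ_unique by metis
qed




lemma split_pt:
  assumes "K > 0" "M > 0" "j = a * m + r" "real m = M"
  shows "real j / (K * M) = (real r / M + real a) / K"
  using assms by (simp add: field_simps)

lemma Pss_unique:
  assumes B: "binary_digit_vector B" and P1: "Pss B \<mu>1" and P2: "Pss B \<mu>2"
  shows "\<mu>1 = \<mu>2"
proof -
  define K where "K = length B"
  define D where "D = digit_set B"
  define n where "n = sum_list B"
  note f1 = Pss_facts[OF B P1, folded K_def D_def n_def]
  note f2 = Pss_facts[OF B P2, folded K_def D_def n_def]
  note bf = bdv_facts[OF B, folded D_def K_def n_def]
  have K3: "K \<ge> 3" using bf by simp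
  have lat: "\<forall>j. j \<le> K ^ k \<longrightarrow> cdf \<mu>1 (real j / real K ^ k) = cdf \<mu>2 (real j / real K ^ k)" for k
  proof (induction k)
    case 0
    show ?case
    proof (intro allI impI)
      fix j :: nat assume "j \<le> K ^ 0"
      then have "j = 0 \<or> j = 1" by auto
      then show "cdf \<mu>1 (real j / real K ^ 0) = cdf \<mu>2 (real j / real K ^ 0)"
        using f1(3,4) f2(3,4) by auto
    qed
  next
    case (Suc k)
    show ?case
    proof (intro allI impI)
      fix j :: nat assume j: "j \<le> K ^ Suc k"
      show "cdf \<mu>1 (real j / real K ^ Suc k) = cdf \<mu>2 (real j / real K ^ Suc k)"
      proof (cases "j = K ^ Suc k")
        case True
        then show ?thesis using f1(4) f2(4) K3 by simp
      next
        case False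
        with j have jl: "j < K ^ Suc k" by simp
        define a where "a = j div K ^ k"
        define r where "r = j mod K ^ k"
        have Kk: "K ^ k > 0" using K3 by simp
        have aK: "a < K" unfolding a_def using jl Kk
          by (simp add: div_less_iff_less_mult mult.commute)
        have rl: "r < K ^ k" unfolding r_def using Kk by simp
        have "real r \<le> real K ^ k" using rl by (metis less_imp_le of_nat_le_iff of_nat_power)
        then have y01: "real r / real K ^ k \<in> {0..1}" using Kk by simp
        have eq: "real j / real K ^ Suc k = (real r / real K ^ k + real a) / real K"
          unfolding power_Suc using K3 by (intro split_pt[where m="K ^ k"]) (auto simp: a_def r_def div_mult_mod_eq)
        have ih: "cdf \<mu>1 (real r / real K ^ k) = cdf \<mu>2 (real r / real K ^ k)"
          using Suc rl by simp
        show ?thesis unfolding eq f1(5)[OF y01 aK] f2(5)[OF y01 aK] ih ..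
      qed
    qed
  qed
  have "cdf \<mu>1 x = cdf \<mu>2 x" for x
  proof -
    consider "x < 0" | "x \<ge> 1" | "x \<in> {0..1}" by fastforce
    then show ?thesis
    proof cases
      case 3
      show ?thesis
        by (rule dense_eq[of K]) (use K3 lat 3 finite_borel_measure.cdf_is_right_cont[OF real_distribution.finite_borel_measure_M[OF f1(1)]]
            finite_borel_measure.cdf_is_right_cont[OF real_distribution.finite_borel_measure_M[OF f2(1)]] in auto)
    qed (use f1 f2 in auto)
  qed
  then show ?thesis using cdf_unique[OF f1(1) f2(1)] by auto
qed

lemma ss_measure_Pss:
  assumes B: "binary_digit_vector B"
  shows "Pss B (ss_measure B)"
proof -
  have "ss_measure B = (THE \<mu>. Pss B \<mu>)" unfolding ss_measure_def Pss_def ..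
  moreover have "\<exists>!\<mu>. Pss B \<mu>" using Pss_exists[OF B] Pss_unique[OF B] by blast
  ultimately show ?thesis using theI' by metis
qed



lemma sfun_aff: "sfun D j t = sfun D j 0 + t * (sfun D j 1 - sfun D j 0)"
proof -
  have "sfun D j t = (\<Sum>d\<in>D. (if d < j then 1 else 0) + t * (if d < j then 0 else if d = j then 1 else 0))"
    unfolding sfun_def by (intro sum.cong refl) auto
  also have "\<dots> = sfun D j 0 + t * (sfun D j 1 - sfun D j 0)"
    unfolding sfun_def sum.distrib sum_distrib_left[symmetric] sum_subtractf[symmetric]
    by (intro arg_cong2[where f="(+)"] arg_cong2[where f="(*)"] refl sum.cong) auto
  finally show ?thesis .
qed

lemma aff_comp:
  fixes f g :: "real \<Rightarrow> real"
  assumes "\<And>t. f t = f 0 + t * (f 1 - f 0)" "\<And>t. g t = g 0 + t * (g 1 - g 0)"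
  shows "f (g t) = f (g 0) + t * (f (g 1) - f (g 0))"
proof -
  have e1: "f (g t) = f 0 + (g 0 + t * (g 1 - g 0)) * (f 1 - f 0)" using assms(1)[of "g t"] assms(2)[of t] by simp
  have e2: "f (g 0) = f 0 + g 0 * (f 1 - f 0)" by (rule assms(1))
  have e3: "f (g 1) = f 0 + g 1 * (f 1 - f 0)" by (rule assms(1))
  show ?thesis unfolding e1 e2 e3 by (simp add: algebra_simps)
qed

lemma phi_aff:
  "sfun D1 a (sfun D2 c t / n2) / n1 =
     sfun D1 a (sfun D2 c 0 / n2) / n1 + t * (sfun D1 a (sfun D2 c 1 / n2) / n1 - sfun D1 a (sfun D2 c 0 / n2) / n1)"
proof (rule aff_comp[where f="\<lambda>u. sfun D1 a u / n1" and g="\<lambda>t. sfun D2 c t / n2"])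
  show "sfun D1 a u / n1 = sfun D1 a 0 / n1 + u * (sfun D1 a 1 / n1 - sfun D1 a 0 / n1)" for u
    by (simp only: sfun_aff[of D1 a u]) (simp add: add_divide_distrib diff_divide_distrib right_diff_distrib)
  show "sfun D2 c u / n2 = sfun D2 c 0 / n2 + u * (sfun D2 c 1 / n2 - sfun D2 c 0 / n2)" for u
    by (simp only: sfun_aff[of D2 c u]) (simp add: add_divide_distrib diff_divide_distrib right_diff_distrib)
qed

lemma half:
  fixes F G :: "real \<Rightarrow> real" and K1 K2 m :: nat
  assumes hF: "\<And>x j. x \<in> {0..1} \<Longrightarrow> j < K1 \<Longrightarrow> F ((x + real j) / real K1) = sfun D1 j (F x) / n1"
    and hG: "\<And>x j. x \<in> {0..1} \<Longrightarrow> j < K2 \<Longrightarrow> G ((x + real j) / real K2) = sfun D2 j (G x) / n2"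
    and m: "m < K1 * K2" and y: "y \<in> {0..1}"
    and eq: "F ((y + real (m mod K2)) / real K2) = G ((y + real (m mod K2)) / real K2)"
  shows "F ((y + real m) / (real K1 * real K2)) = sfun D1 (m div K2) (sfun D2 (m mod K2) (G y) / n2) / n1"
proof -
  have K2: "K2 > 0" using m by (cases K2) auto
  have K1: "K1 > 0" using m by (cases K1) auto
  have aK: "m div K2 < K1" using m K2 by (simp add: div_less_iff_less_mult)
  have cK: "m mod K2 < K2" using K2 by simp
  have "real (m mod K2) \<le> real K2 - 1" using cK by linarith
  then have z: "(y + real (m mod K2)) / real K2 \<in> {0..1}" using y K2 by (auto simp: field_simps)
  have mm: "real m = real (m div K2) * real K2 + real (m mod K2)"
    by (metis div_mult_mod_eq of_nat_add of_nat_mult)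
  have pt: "(y + real m) / (real K1 * real K2) = ((y + real (m mod K2)) / real K2 + real (m div K2)) / real K1"
    using K1 K2 unfolding mm by (simp add: field_simps)
  show ?thesis unfolding pt hF[OF z aK] eq hG[OF y cK] ..
qed

lemma main_lattice:
  fixes F G :: "real \<Rightarrow> real" and N L M :: nat
  assumes N2: "N \<ge> 2" and L1: "L \<ge> 1" and M1: "M \<ge> 1"
    and hF: "\<And>x j. x \<in> {0..1} \<Longrightarrow> j < N ^ L \<Longrightarrow> F ((x + real j) / real (N ^ L)) = sfun D1 j (F x) / n1"
    and hG: "\<And>x j. x \<in> {0..1} \<Longrightarrow> j < N ^ M \<Longrightarrow> G ((x + real j) / real (N ^ M)) = sfun D2 j (G x) / n2"
    and F0: "F 0 = 0" and F1: "F 1 = 1" and G0: "G 0 = 0" and G1: "G 1 = 1"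
    and hS: "\<And>m. m \<le> N ^ (L + M) \<Longrightarrow> F (real m / real (N ^ (L + M))) = G (real m / real (N ^ (L + M)))"
  shows "j \<le> N ^ k \<Longrightarrow> F (real j / real (N ^ k)) = G (real j / real (N ^ k))"
proof -
  have Np: "\<And>k. N ^ k > 0" using N2 by simp
  have N0: "real N > 0" using N2 by simp
  have base: "F (real j / real (N ^ k)) = G (real j / real (N ^ k))" if "k \<le> L + M" "j \<le> N ^ k" for j k
  proof -
    have e: "real j / real (N ^ k) = real (j * N ^ (L + M - k)) / real (N ^ (L + M))"
    proof -
      have "N ^ (L + M) = N ^ k * N ^ (L + M - k)" using that(1) by (simp flip: power_add)
      then show ?thesis using N0 by (simp add: field_simps)
    qed
    have "j * N ^ (L + M - k) \<le> N ^ k * N ^ (L + M - k)" using that(2) by simp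
    also have "\<dots> = N ^ (L + M)" using that(1) by (simp flip: power_add)
    finally show ?thesis unfolding e by (rule hS)
  qed
  show "j \<le> N ^ k \<Longrightarrow> F (real j / real (N ^ k)) = G (real j / real (N ^ k))"
  proof (induction k arbitrary: j rule: less_induct)
    case (less k)
    show ?case
    proof (cases "k \<le> L + M")
      case True
      then show ?thesis using base less.prems by blast
    next
      case False
      define t where "t = k - (L + M)"
      have kt: "k = t + (L + M)" and t1: "t \<ge> 1" using False by (auto simp: t_def)
      show ?thesis
      proof (cases "j = N ^ k")
        case True
        then show ?thesis using F1 G1 N0 by simp
      next
        case False
        then have jl: "j < N ^ k" using less.prems by simp
        define m where "m = j div N ^ t"
        define r where "r = j mod N ^ t"
        define y where "y = real r / real (N ^ t)"
        have rl: "r < N ^ t" unfolding r_def using Np[of t] by simp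
        have "N ^ k = (N ^ L * N ^ M) * N ^ t" unfolding kt by (simp add: power_add mult_ac)
        then have ml: "m < N ^ L * N ^ M" unfolding m_def using jl Np[of t]
          by (simp add: div_less_iff_less_mult)
        have "real r \<le> real (N ^ t)" using rl by simp
        then have y: "y \<in> {0..1}" unfolding y_def using Np[of t] by simp
        have mm: "real j = real m * real (N ^ t) + real r"
          unfolding m_def r_def by (metis div_mult_mod_eq of_nat_add of_nat_mult)
        have pt: "real j / real (N ^ k) = (y + real m) / (real (N ^ L) * real (N ^ M))"
          unfolding y_def mm kt using Np[of t] by (simp add: power_add field_simps)
        have pt': "real j / real (N ^ k) = (y + real m) / (real (N ^ M) * real (N ^ L))"
          unfolding pt by (simp add: mult.commute)
        have Fy: "F y = G y" unfolding y_def using less.IH[of t r] rl kt L1 by simp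
        have lvl: "F ((y + real c) / real (N ^ P)) = G ((y + real c) / real (N ^ P))"
          if c: "c < N ^ P" and P: "P = L \<or> P = M" for c P
        proof -
          have e: "(y + real c) / real (N ^ P) = real (r + c * N ^ t) / real (N ^ (t + P))"
            unfolding y_def using Np[of t] Np[of P] by (simp add: power_add field_simps)
          have "r + c * N ^ t < N ^ t + c * N ^ t" using rl by simp
          also have "\<dots> = (c + 1) * N ^ t" by simp
          also have "\<dots> \<le> N ^ P * N ^ t" using c by (intro mult_le_mono1) simp
          finally have le: "r + c * N ^ t \<le> N ^ (t + P)" by (simp add: power_add mult.commute)
          have "t + P < k" using kt P L1 M1 by auto
          then show ?thesis unfolding e using less.IH le by blast
        qed
        have lvl0: "F ((z + real c) / real (N ^ P)) = G ((z + real c) / real (N ^ P))"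
          if c: "c < N ^ P" and P: "P = L \<or> P = M" and z: "z = 0 \<or> z = 1" for c P z
        proof -
          have e: "(z + real c) / real (N ^ P) = real (nat (round z) + c) / real (N ^ P)"
            using z by auto
          have "nat (round z) + c \<le> N ^ P" using z c by auto
          moreover have "P \<le> L + M" using P by auto
          ultimately show ?thesis unfolding e by (intro base)
        qed
        let ?\<phi> = "\<lambda>t. sfun D1 (m div N ^ M) (sfun D2 (m mod N ^ M) t / n2) / n1"
        let ?\<psi> = "\<lambda>t. sfun D2 (m div N ^ L) (sfun D1 (m mod N ^ L) t / n1) / n2"
        have ml': "m < N ^ M * N ^ L" using ml by (simp add: mult.commute)
        have hF': "\<And>x j. x \<in> {0..1} \<Longrightarrow> j < N ^ L \<Longrightarrow> F ((x + real j) / real (N ^ L)) = sfun D1 j (F x) / n1"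
          using hF by blast
        have Fphi: "F ((z + real m) / (real (N ^ L) * real (N ^ M))) = ?\<phi> (G z)"
          if "z \<in> {0..1}" "F ((z + real (m mod N ^ M)) / real (N ^ M)) = G ((z + real (m mod N ^ M)) / real (N ^ M))" for z
          by (rule half[OF hF hG ml that])
        have Gpsi: "G ((z + real m) / (real (N ^ M) * real (N ^ L))) = ?\<psi> (F z)"
          if "z \<in> {0..1}" "G ((z + real (m mod N ^ L)) / real (N ^ L)) = F ((z + real (m mod N ^ L)) / real (N ^ L))" for z
          by (rule half[OF hG hF ml' that])
        have mM: "m mod N ^ M < N ^ M" and mL: "m mod N ^ L < N ^ L" using Np by auto
        have a0: "F ((0 + real (m mod N ^ M)) / real (N ^ M)) = G ((0 + real (m mod N ^ M)) / real (N ^ M))"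
          by (rule lvl0[OF mM]) auto
        have a1: "F ((1 + real (m mod N ^ M)) / real (N ^ M)) = G ((1 + real (m mod N ^ M)) / real (N ^ M))"
          by (rule lvl0[OF mM]) auto
        have b0: "G ((0 + real (m mod N ^ L)) / real (N ^ L)) = F ((0 + real (m mod N ^ L)) / real (N ^ L))"
          by (rule lvl0[OF mL, symmetric]) auto
        have b1: "G ((1 + real (m mod N ^ L)) / real (N ^ L)) = F ((1 + real (m mod N ^ L)) / real (N ^ L))"
          by (rule lvl0[OF mL, symmetric]) auto
        have p0: "?\<phi> 0 = ?\<psi> 0"
        proof -
          have "?\<phi> 0 = F ((0 + real m) / (real (N ^ L) * real (N ^ M)))"
            using Fphi[OF _ a0] G0 by simp
          also have "\<dots> = G ((0 + real m) / (real (N ^ M) * real (N ^ L)))"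
            using hS[of m] ml by (simp add: power_add mult.commute)
          also have "\<dots> = ?\<psi> 0" using Gpsi[OF _ b0] F0 by simp
          finally show ?thesis .
        qed
        have p1: "?\<phi> 1 = ?\<psi> 1"
        proof -
          have "?\<phi> 1 = F ((1 + real m) / (real (N ^ L) * real (N ^ M)))"
            using Fphi[OF _ a1] G1 by simp
          also have "\<dots> = G ((1 + real m) / (real (N ^ M) * real (N ^ L)))"
            using hS[of "m + 1"] ml by (simp add: power_add mult.commute add.commute)
          also have "\<dots> = ?\<psi> 1" using Gpsi[OF _ b1] F1 by simp
          finally show ?thesis .
        qed
        have "F (real j / real (N ^ k)) = ?\<phi> (G y)"
          unfolding pt using Fphi[OF y lvl[OF mM, OF disjI2[OF refl]]] by simp
        also have "\<dots> = ?\<phi> 0 + G y * (?\<phi> 1 - ?\<phi> 0)" by (rule phi_aff)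
        also have "\<dots> = ?\<psi> 0 + F y * (?\<psi> 1 - ?\<psi> 0)" using p0 p1 Fy by simp
        also have "\<dots> = ?\<psi> (F y)" by (rule phi_aff[symmetric])
        also have "\<dots> = G (real j / real (N ^ k))"
          unfolding pt' using Gpsi[OF y lvl[OF mL, OF disjI1[OF refl], symmetric]] by simp
        finally show ?thesis .
      qed
    qed
  qed
qed



theorem proposition2p6:
  fixes L M N :: nat and BL BM :: "nat list"
  assumes "binary_digit_vector BL" and "length BL = N ^ L"
      and "binary_digit_vector BM" and "length BM = N ^ M"
  shows "(\<forall>x \<in> {real m / real (N ^ (L + M)) | m. 1 \<le> m \<and> m \<le> N ^ (L + M) - 1}.
            ss_cdf BL x = ss_cdf BM x)
         \<longleftrightarrow> (\<forall>x \<in> {0..1}. ss_cdf BL x = ss_cdf BM x)"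
proof -
  note BL = assms(1) and BM = assms(3)
  define \<mu>L where "\<mu>L = ss_measure BL"
  define \<mu>M where "\<mu>M = ss_measure BM"
  note fL = Pss_facts[OF BL ss_measure_Pss[OF BL], folded \<mu>L_def]
  note fM = Pss_facts[OF BM ss_measure_Pss[OF BM], folded \<mu>M_def]
  have sL: "ss_cdf BL x = cdf \<mu>L x" if "x \<ge> 0" for x
    unfolding ss_cdf_def \<mu>L_def[symmetric] using fL(6)[OF that] .
  have sM: "ss_cdf BM x = cdf \<mu>M x" if "x \<ge> 0" for x
    unfolding ss_cdf_def \<mu>M_def[symmetric] using fM(6)[OF that] .
  have lenL: "length BL \<ge> 3" and lenM: "length BM \<ge> 3"
    using bdv_facts[OF BL] bdv_facts[OF BM] by auto
  have L1: "L \<ge> 1" using lenL assms(2) by (cases L) auto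
  have M1: "M \<ge> 1" using lenM assms(4) by (cases M) auto
  have N2: "N \<ge> 2"
  proof (rule ccontr)
    assume "\<not> N \<ge> 2"
    then have "N \<le> 1" by simp
    then have "N = 0 \<or> N = 1" by auto
    then have "N ^ L \<le> 1" by (auto simp: power_0_left)
    then show False using lenL assms(2) by simp
  qed
  have Np: "N ^ (L + M) > 0" using N2 by simp
  let ?S = "{real m / real (N ^ (L + M)) | m. 1 \<le> m \<and> m \<le> N ^ (L + M) - 1}"
  have S01: "?S \<subseteq> {0..1}"
  proof
    fix x assume "x \<in> ?S"
    then obtain m where x: "x = real m / real (N ^ (L + M))" and m: "m \<le> N ^ (L + M) - 1" by auto
    have "real m \<le> real (N ^ (L + M))" using m by linarith
    then show "x \<in> {0..1}" unfolding x using Np by simp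
  qed
  show ?thesis
  proof
    assume H: "\<forall>x\<in>?S. ss_cdf BL x = ss_cdf BM x"
    have hS: "cdf \<mu>L (real m / real (N ^ (L + M))) = cdf \<mu>M (real m / real (N ^ (L + M)))"
      if m: "m \<le> N ^ (L + M)" for m
    proof -
      consider "m = 0" | "m = N ^ (L + M)" | "1 \<le> m \<and> m \<le> N ^ (L + M) - 1" using m by linarith
      then show ?thesis
      proof cases
        case 1 then show ?thesis using fL(3) fM(3) by simp
      next
        case 2 then show ?thesis using fL(4) fM(4) Np by simp
      next
        case 3
        then have xS: "real m / real (N ^ (L + M)) \<in> ?S" by blast
        then have x0: "real m / real (N ^ (L + M)) \<ge> 0" using S01 by auto
        have "ss_cdf BL (real m / real (N ^ (L + M))) = ss_cdf BM (real m / real (N ^ (L + M)))"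
          using H xS by blast
        then show ?thesis unfolding sL[OF x0] sM[OF x0] .
      qed
    qed
    have hF: "\<And>x j. x \<in> {0..1} \<Longrightarrow> j < N ^ L \<Longrightarrow>
        cdf \<mu>L ((x + real j) / real (N ^ L)) = sfun (digit_set BL) j (cdf \<mu>L x) / real (sum_list BL)"
      unfolding assms(2)[symmetric] by (rule fL(5))
    have hG: "\<And>x j. x \<in> {0..1} \<Longrightarrow> j < N ^ M \<Longrightarrow>
        cdf \<mu>M ((x + real j) / real (N ^ M)) = sfun (digit_set BM) j (cdf \<mu>M x) / real (sum_list BM)"
      unfolding assms(4)[symmetric] by (rule fM(5))
    have lat: "cdf \<mu>L (real j / real (N ^ k)) = cdf \<mu>M (real j / real (N ^ k))" if "j \<le> N ^ k" for j k
      by (rule main_lattice[OF N2 L1 M1 hF hG fL(3) fL(4)[OF order_refl] fM(3) fM(4)[OF order_refl] hS that])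
    show "\<forall>x\<in>{0..1}. ss_cdf BL x = ss_cdf BM x"
    proof
      fix x :: real assume x: "x \<in> {0..1}"
      have "cdf \<mu>L x = cdf \<mu>M x"
        by (rule dense_eq[OF N2 lat[unfolded of_nat_power]
             finite_borel_measure.cdf_is_right_cont[OF real_distribution.finite_borel_measure_M[OF fL(1)]]
             finite_borel_measure.cdf_is_right_cont[OF real_distribution.finite_borel_measure_M[OF fM(1)]] x])
      moreover have "x \<ge> 0" using x by simp
      ultimately show "ss_cdf BL x = ss_cdf BM x" using sL sM by metis
    qed
  next
    assume "\<forall>x\<in>{0..1}. ss_cdf BL x = ss_cdf BM x"
    then show "\<forall>x\<in>?S. ss_cdf BL x = ss_cdf BM x" using S01 by blast
  qed
qed

end
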